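(* Let $G$ be a finite, simple, connected graph with $\dim_{wt}(G)=2$. Then $G$ has no complete vertex of degree more than three.
   Context: $d(x,y)$ is the shortest-path distance. A vertex $v$ is a complete vertex if its neighborhood $N(v)$ induces a complete graph $K_{d(v)}$. A set $W\subseteq V(G)$ is a resolving set if for every two distinct vertices $y,z$ there is $x\in W$ with $d(y,x)\ne d(z,x)$. A set $W$ is a weak total resolving set (WTR-set) if $W$ is resolving and, for every $w\in W$ and every $x\in V(G)\setminus W$, there is $w'\in W\setminus\{w\}$ with $d(x,w')\ne d(w,w')$. $\dim_{wt}(G)$ is the minimum cardinality of a WTR-set. *)

theory Defs
  imports Main
begin

definition simple_graph :: "'a set \<Rightarrow> ('a \<Rightarrow> 'a \<Rightarrow> bool) \<Rightarrow> bool" where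
  "simple_graph V E \<longleftrightarrow> finite V \<and> (\<forall>x y. E x y \<longrightarrow> x \<in> V \<and> y \<in> V)
     \<and> (\<forall>x y. E x y \<longrightarrow> E y x) \<and> (\<forall>x. \<not> E x x)"

definition connected_graph :: "'a set \<Rightarrow> ('a \<Rightarrow> 'a \<Rightarrow> bool) \<Rightarrow> bool" where
  "connected_graph V E \<longleftrightarrow> V \<noteq> {} \<and> (\<forall>x\<in>V. \<forall>y\<in>V. \<exists>n. (E ^^ n) x y)"

definition gdist :: "('a \<Rightarrow> 'a \<Rightarrow> bool) \<Rightarrow> 'a \<Rightarrow> 'a \<Rightarrow> nat" where
  "gdist E x y = (LEAST n. (E ^^ n) x y)"

definition neighbors :: "('a \<Rightarrow> 'a \<Rightarrow> bool) \<Rightarrow> 'a \<Rightarrow> 'a set" where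
  "neighbors E v = {u. E v u}"

definition degree :: "('a \<Rightarrow> 'a \<Rightarrow> bool) \<Rightarrow> 'a \<Rightarrow> nat" where
  "degree E v = card (neighbors E v)"

definition complete_vertex :: "('a \<Rightarrow> 'a \<Rightarrow> bool) \<Rightarrow> 'a \<Rightarrow> bool" where
  "complete_vertex E v \<longleftrightarrow>
     (\<forall>x\<in>neighbors E v. \<forall>y\<in>neighbors E v. x \<noteq> y \<longrightarrow> E x y)"

definition resolving_set :: "'a set \<Rightarrow> ('a \<Rightarrow> 'a \<Rightarrow> bool) \<Rightarrow> 'a set \<Rightarrow> bool" where
  "resolving_set V E W \<longleftrightarrow> W \<subseteq> V \<and>
     (\<forall>y\<in>V. \<forall>z\<in>V. y \<noteq> z \<longrightarrow> (\<exists>x\<in>W. gdist E y x \<noteq> gdist E z x))"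

definition wtr_set :: "'a set \<Rightarrow> ('a \<Rightarrow> 'a \<Rightarrow> bool) \<Rightarrow> 'a set \<Rightarrow> bool" where
  "wtr_set V E W \<longleftrightarrow> resolving_set V E W \<and>
     (\<forall>w\<in>W. \<forall>x\<in>V - W. \<exists>w'\<in>W - {w}. gdist E x w' \<noteq> gdist E w w')"

definition dim_wt :: "'a set \<Rightarrow> ('a \<Rightarrow> 'a \<Rightarrow> bool) \<Rightarrow> nat" where
  "dim_wt V E = (LEAST k. \<exists>W. wtr_set V E W \<and> card W = k)"

end

theory Submission
  imports Defs
begin

lemma gdist_adj:
  assumes "simple_graph V E" "connected_graph V E" "E u w" "a \<in> V"
  shows "gdist E u a \<le> Suc (gdist E w a)"
proof -
  have wV: "w \<in> V" using assms unfolding simple_graph_def by blast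
  obtain n where "(E ^^ n) w a" using assms(2) wV assms(4) unfolding connected_graph_def by blast
  hence "(E ^^ gdist E w a) w a" unfolding gdist_def by (rule LeastI)
  hence "(E ^^ Suc (gdist E w a)) u a" using assms(3) by (rule relpowp_Suc_I2[rotated])
  thus ?thesis unfolding gdist_def by (rule Least_le)
qed

lemma clique_vals:
  fixes g :: "'a \<Rightarrow> nat"
  assumes fin: "finite K" and ne: "K \<noteq> {}"
    and adj: "\<And>x y. x \<in> K \<Longrightarrow> y \<in> K \<Longrightarrow> x \<noteq> y \<Longrightarrow> g x \<le> Suc (g y)"
  shows "\<exists>p. \<forall>u\<in>K. g u \<in> {p, Suc p}"
proof -
  define p where "p = Min (g ` K)"
  have "\<forall>u\<in>K. g u \<in> {p, Suc p}"
  proof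
    fix u assume u: "u \<in> K"
    have "p \<in> g ` K" unfolding p_def using fin ne by simp
    then obtain u0 where u0: "u0 \<in> K" "g u0 = p" by auto
    have "p \<le> g u" unfolding p_def using fin u by simp
    moreover have "g u \<le> Suc p" using adj[OF u u0(1)] u0 by (cases "u = u0") auto
    ultimately show "g u \<in> {p, Suc p}" by auto
  qed
  thus ?thesis by blast
qed

theorem theorem3:
  fixes V :: "'a set" and E :: "'a \<Rightarrow> 'a \<Rightarrow> bool"
  assumes "simple_graph V E" and "connected_graph V E"
    and "dim_wt V E = 2"
  shows "\<not> (\<exists>v\<in>V. complete_vertex E v \<and> degree E v > 3)"
proof
  assume "\<exists>v\<in>V. complete_vertex E v \<and> degree E v > 3"
  then obtain v where vV: "v \<in> V" and cv: "complete_vertex E v" and dg: "degree E v > 3" by blast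
  have sg: "finite V" "\<And>x y. E x y \<Longrightarrow> x \<in> V \<and> y \<in> V" "\<And>x y. E x y \<Longrightarrow> E y x" "\<And>x. \<not> E x x"
    using assms(1) unfolding simple_graph_def by blast+
  have "wtr_set V E V" unfolding wtr_set_def resolving_set_def
  proof (intro conjI ballI impI)
    fix y z assume "y \<in> V" "z \<in> V" "y \<noteq> z"
    have "gdist E y y = 0" unfolding gdist_def by (rule Least_equality) auto
    moreover have "gdist E z y \<noteq> 0"
    proof
      assume "gdist E z y = 0"
      moreover obtain n where "(E ^^ n) z y" using assms(2) \<open>y \<in> V\<close> \<open>z \<in> V\<close>
        unfolding connected_graph_def by blast
      hence "(E ^^ gdist E z y) z y" unfolding gdist_def by (rule LeastI)
      ultimately show False using \<open>y \<noteq> z\<close> by simp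
    qed
    ultimately show "\<exists>x\<in>V. gdist E y x \<noteq> gdist E z x" using \<open>y \<in> V\<close> by metis
  qed auto
  hence "\<exists>W. wtr_set V E W \<and> card W = card V" by blast
  hence "\<exists>W. wtr_set V E W \<and> card W = dim_wt V E" unfolding dim_wt_def by (rule LeastI)
  then obtain W where W: "wtr_set V E W" "card W = 2" using assms(3) by auto
  then obtain a b where ab: "W = {a, b}" by (auto simp: card_2_iff)
  have WV: "W \<subseteq> V" and res: "\<And>y z. y \<in> V \<Longrightarrow> z \<in> V \<Longrightarrow> y \<noteq> z \<Longrightarrow> \<exists>x\<in>W. gdist E y x \<noteq> gdist E z x"
    using W(1) unfolding wtr_set_def resolving_set_def by blast+
  have aV: "a \<in> V" and bV: "b \<in> V" using WV ab by auto
  define K where "K = insert v (neighbors E v)"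
  have NV: "neighbors E v \<subseteq> V" using sg(2) unfolding neighbors_def by auto
  have KV: "K \<subseteq> V" using NV vV K_def by auto
  have finK: "finite K" using KV sg(1) finite_subset by blast
  have adjK: "\<And>x y. x \<in> K \<Longrightarrow> y \<in> K \<Longrightarrow> x \<noteq> y \<Longrightarrow> E x y"
  proof -
    fix x y assume "x \<in> K" "y \<in> K" "x \<noteq> y"
    show "E x y"
    proof (cases "x = v")
      case True thus ?thesis using \<open>y \<in> K\<close> \<open>x \<noteq> y\<close> unfolding K_def neighbors_def by simp
    next
      case False
      show ?thesis
      proof (cases "y = v")
        case True thus ?thesis using \<open>x \<in> K\<close> False sg(3) unfolding K_def neighbors_def by simp
      next
        case F2: False
        thus ?thesis using \<open>x \<in> K\<close> \<open>y \<in> K\<close> False \<open>x \<noteq> y\<close> cv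
          unfolding K_def complete_vertex_def by simp
      qed
    qed
  qed
  have vN: "v \<notin> neighbors E v" using sg(4) unfolding neighbors_def by auto
  have cardK: "card K \<ge> 5" unfolding K_def using dg vN finite_subset[OF NV sg(1)]
    by (simp add: degree_def)
  obtain p where p: "\<forall>u\<in>K. gdist E u a \<in> {p, Suc p}"
  proof -
    have "\<exists>p. \<forall>u\<in>K. gdist E u a \<in> {p, Suc p}"
      by (rule clique_vals[OF finK]) (auto simp: K_def intro: gdist_adj[OF assms(1,2) adjK aV])
    thus ?thesis using that by blast
  qed
  obtain q where q: "\<forall>u\<in>K. gdist E u b \<in> {q, Suc q}"
  proof -
    have "\<exists>p. \<forall>u\<in>K. gdist E u b \<in> {p, Suc p}"
      by (rule clique_vals[OF finK]) (auto simp: K_def intro: gdist_adj[OF assms(1,2) adjK bV])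
    thus ?thesis using that by blast
  qed
  define f where "f u = (gdist E u a, gdist E u b)" for u
  have "inj_on f K"
  proof
    fix y z assume "y \<in> K" "z \<in> K" "f y = f z"
    show "y = z"
    proof (rule ccontr)
      assume "y \<noteq> z"
      then obtain x where "x \<in> W" "gdist E y x \<noteq> gdist E z x" using res KV \<open>y \<in> K\<close> \<open>z \<in> K\<close> by blast
      thus False using \<open>f y = f z\<close> ab unfolding f_def by auto
    qed
  qed
  moreover have "f ` K \<subseteq> {p, Suc p} \<times> {q, Suc q}" using p q unfolding f_def by auto
  ultimately have "card K \<le> card ({p, Suc p} \<times> {q, Suc q})"
    by (metis card_image card_mono finite_SigmaI finite.emptyI finite.insertI)
  also have "\<dots> = 4" by (simp add: card_cartesian_product)
  finally show False using cardK by simp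
qed

end
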